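(* Let $G$ and $H$ be two uncountable groups of the same regular cardinality $\gamma$. Then the balleans $\mathcal{B}(G)$ and $\mathcal{B}(H)$ are asymorphic.
   Context: For an infinite group $G$ with identity $e$, $\mathcal{B}(G)=(G,\mathcal{F},B)$ where $\mathcal{F}=\{A\subseteq G: e\in A, |A|<|G|\}$ and $B(g,A)=gA$. For balleans $(X_1,P_1,B_1)$, $(X_2,P_2,B_2)$ (sets with families of balls $B(x,\alpha)\subseteq X$ indexed by $x\in X,\alpha\in P$), a map $f:X_1\to X_2$ is a $\prec$-mapping if for every $\alpha\in P_1$ there is $\beta\in P_2$ with $f(B_1(x,\alpha))\subseteq B_2(f(x),\beta)$ for all $x\in X_1$; a bijection $f$ is an asymorphism if $f$ and $f^{-1}$ are $\prec$-mappings, and the balleans are then called asymorphic. *)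

theory Defs
  imports "HOL-Algebra.Coset" "HOL-Library.Countable_Set"
begin

text \<open>A ballean is given by a support set X, an index set P and a ball function
  B :: point => index => set.\<close>

definition prec_mapping ::
  "'a set \<Rightarrow> 'p set \<Rightarrow> ('a \<Rightarrow> 'p \<Rightarrow> 'a set) \<Rightarrow>
   'b set \<Rightarrow> 'q set \<Rightarrow> ('b \<Rightarrow> 'q \<Rightarrow> 'b set) \<Rightarrow> ('a \<Rightarrow> 'b) \<Rightarrow> bool" where
  "prec_mapping X1 P1 B1 X2 P2 B2 f \<longleftrightarrow>
     (\<forall>\<alpha>\<in>P1. \<exists>\<beta>\<in>P2. \<forall>x\<in>X1. f ` (B1 x \<alpha>) \<subseteq> B2 (f x) \<beta>)"

definition asymorphism ::
  "'a set \<Rightarrow> 'p set \<Rightarrow> ('a \<Rightarrow> 'p \<Rightarrow> 'a set) \<Rightarrow>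
   'b set \<Rightarrow> 'q set \<Rightarrow> ('b \<Rightarrow> 'q \<Rightarrow> 'b set) \<Rightarrow> ('a \<Rightarrow> 'b) \<Rightarrow> bool" where
  "asymorphism X1 P1 B1 X2 P2 B2 f \<longleftrightarrow>
     bij_betw f X1 X2 \<and> prec_mapping X1 P1 B1 X2 P2 B2 f
     \<and> prec_mapping X2 P2 B2 X1 P1 B1 (inv_into X1 f)"

definition asymorphic ::
  "'a set \<Rightarrow> 'p set \<Rightarrow> ('a \<Rightarrow> 'p \<Rightarrow> 'a set) \<Rightarrow>
   'b set \<Rightarrow> 'q set \<Rightarrow> ('b \<Rightarrow> 'q \<Rightarrow> 'b set) \<Rightarrow> bool" where
  "asymorphic X1 P1 B1 X2 P2 B2 \<longleftrightarrow> (\<exists>f. asymorphism X1 P1 B1 X2 P2 B2 f)"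

definition group_ballean_F :: "('a, 'm) monoid_scheme \<Rightarrow> 'a set set" where
  "group_ballean_F G = {A. A \<subseteq> carrier G \<and> \<one>\<^bsub>G\<^esub> \<in> A \<and>
                         (card_of A, card_of (carrier G)) \<in> ordLess}"

definition group_ballean_B :: "('a, 'm) monoid_scheme \<Rightarrow> 'a \<Rightarrow> 'a set \<Rightarrow> 'a set" where
  "group_ballean_B G g A = g <#\<^bsub>G\<^esub> A"

definition group_balleans_asymorphic ::
  "('a, 'm) monoid_scheme \<Rightarrow> ('b, 'n) monoid_scheme \<Rightarrow> bool" where
  "group_balleans_asymorphic G H \<longleftrightarrow>
     asymorphic (carrier G) (group_ballean_F G) (group_ballean_B G)
                (carrier H) (group_ballean_F H) (group_ballean_B H)"

end

theory Submission
  imports Defs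
begin

unbundle cardinal_syntax


primrec wgen :: "('a, 'm) monoid_scheme \<Rightarrow> 'a set \<Rightarrow> nat \<Rightarrow> 'a set" where
  "wgen G S 0 = insert \<one>\<^bsub>G\<^esub> S"
| "wgen G S (Suc n) = (\<lambda>(x,y). x \<otimes>\<^bsub>G\<^esub> inv\<^bsub>G\<^esub> y) ` (wgen G S n \<times> wgen G S n)"

lemma card_Un_le_inf: "infinite C \<Longrightarrow> |A| \<le>o |C| \<Longrightarrow> |B| \<le>o |C| \<Longrightarrow> |A \<union> B| \<le>o |C|"
  by (metis Field_card_of card_of_Card_order card_of_Un_ordLeq_infinite_Field)

context group begin

lemma lc_mem: "subgroup D G \<Longrightarrow> x \<in> carrier G \<Longrightarrow> y \<in> x <# D \<longleftrightarrow> y \<in> carrier G \<and> inv x \<otimes> y \<in> D"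
  unfolding l_coset_def
  by (auto simp: subgroup.mem_carrier m_assoc[symmetric] intro!: bexI[where x="inv x \<otimes> y"])

lemma lc_self: "subgroup D G \<Longrightarrow> x \<in> carrier G \<Longrightarrow> x \<in> x <# D"
  by (simp add: lc_mem subgroup.one_closed)

lemma lc_eq: assumes "subgroup D G" "x \<in> carrier G" "y \<in> carrier G"
  shows "x <# D = y <# D \<longleftrightarrow> inv x \<otimes> y \<in> D"
proof
  assume "x <# D = y <# D"
  then have "y \<in> x <# D" using lc_self assms by blast
  then show "inv x \<otimes> y \<in> D" using lc_mem assms by blast
next
  assume "inv x \<otimes> y \<in> D"
  then have "y \<in> x <# D" using lc_mem assms by blast
  then show "x <# D = y <# D" using l_repr_independence assms by blast
qed

lemma lc_card: "|x <# D| \<le>o |D|"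
proof -
  have "x <# D = (\<lambda>h. x \<otimes> h) ` D" unfolding l_coset_def by auto
  then show ?thesis by (simp add: card_of_image)
qed

lemma wgen_carrier: "S \<subseteq> carrier G \<Longrightarrow> wgen G S n \<subseteq> carrier G"
  by (induction n) auto

lemma wgen_one: "\<one> \<in> wgen G S n"
proof (induction n)
  case (Suc n)
  then have "\<one> \<otimes> inv \<one> \<in> wgen G S (Suc n)" unfolding wgen.simps
    by (intro rev_image_eqI[of "(\<one>,\<one>)"]) auto
  then show ?case by simp
qed simp

lemma wgen_Suc: assumes "S \<subseteq> carrier G" shows "wgen G S n \<subseteq> wgen G S (Suc n)"
proof
  fix x assume x: "x \<in> wgen G S n"
  have "x \<otimes> inv \<one> \<in> wgen G S (Suc n)" unfolding wgen.simps
    by (rule rev_image_eqI[of "(x,\<one>)"]) (use x wgen_one in auto)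
  moreover have "x \<otimes> inv \<one> = x" using subsetD[OF wgen_carrier[OF assms] x] by simp
  ultimately show "x \<in> wgen G S (Suc n)" by simp
qed

lemma wgen_mono: assumes "S \<subseteq> carrier G" "n \<le> m" shows "wgen G S n \<subseteq> wgen G S m"
  by (rule lift_Suc_mono_le[of "wgen G S", OF wgen_Suc[OF assms(1)] assms(2)])

lemma wgen_subgroup: assumes "S \<subseteq> carrier G" shows "subgroup (\<Union>n. wgen G S n) G"
proof (rule subgroupI)
  show "(\<Union>n. wgen G S n) \<subseteq> carrier G" using wgen_carrier[OF assms] by blast
  show "(\<Union>n. wgen G S n) \<noteq> {}" using wgen_one by blast
  have cl: "a \<otimes> inv b \<in> (\<Union>n. wgen G S n)" if ab: "a \<in> (\<Union>n. wgen G S n)" "b \<in> (\<Union>n. wgen G S n)" for a b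
  proof -
    obtain n m where "a \<in> wgen G S n" "b \<in> wgen G S m" using ab by blast
    then have "a \<in> wgen G S (max n m)" "b \<in> wgen G S (max n m)"
      using wgen_mono[OF assms max.cobounded1, of n m] wgen_mono[OF assms max.cobounded2, of m n] by blast+
    then have "a \<otimes> inv b \<in> wgen G S (Suc (max n m))" unfolding wgen.simps
      by (intro rev_image_eqI[of "(a,b)"]) auto
    then show ?thesis by blast
  qed
  have car: "a \<in> carrier G" if "a \<in> (\<Union>n. wgen G S n)" for a
    using that wgen_carrier[OF assms] by blast
  have one: "\<one> \<in> (\<Union>n. wgen G S n)" using wgen_one by blast
  show iv: "inv a \<in> (\<Union>n. wgen G S n)" if "a \<in> (\<Union>n. wgen G S n)" for a
  proof -
    have "\<one> \<otimes> inv a \<in> (\<Union>n. wgen G S n)" using cl[OF one that] .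
    then show ?thesis using car[OF that] by simp
  qed
  show "a \<otimes> b \<in> (\<Union>n. wgen G S n)" if "a \<in> (\<Union>n. wgen G S n)" "b \<in> (\<Union>n. wgen G S n)" for a b
  proof -
    have "inv b \<in> (\<Union>n. wgen G S n)" using iv[OF that(2)] .
    then have "a \<otimes> inv (inv b) \<in> (\<Union>n. wgen G S n)" using cl[OF that(1)] by blast
    then show ?thesis using car[OF that(2)] by simp
  qed
qed

lemma wgen_card: assumes "S \<subseteq> carrier G" "infinite S" shows "|wgen G S n| \<le>o |S|"
proof (induction n)
  case 0
  have "S \<noteq> {}" using assms(2) by auto
  then have "|{\<one>}| \<le>o |S|" by (rule card_of_singl_ordLeq)
  then have "|{\<one>} \<union> S| \<le>o |S|" using card_Un_le_inf[OF assms(2), of "{\<one>}" S] card_of_mono1[of S S] by simp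
  then show ?case by simp
next
  case (Suc n)
  have "S \<subseteq> wgen G S n" using wgen_mono[OF assms(1), of 0 n] by auto
  then have inf: "infinite (wgen G S n)" using assms(2) finite_subset by blast
  have "|wgen G S (Suc n)| \<le>o |wgen G S n \<times> wgen G S n|"
    unfolding wgen.simps by (rule card_of_image)
  moreover have "|wgen G S n \<times> wgen G S n| =o |wgen G S n|"
    using inf card_of_Times_same_infinite by blast
  ultimately have "|wgen G S (Suc n)| \<le>o |wgen G S n|" by (rule ordLeq_ordIso_trans)
  then show ?case using Suc by (rule ordLeq_transitive)
qed

lemma small_subgroup: assumes "S \<subseteq> carrier G" "infinite S"
  shows "\<exists>K. subgroup K G \<and> S \<subseteq> K \<and> |K| \<le>o |S|"
proof (intro exI conjI)
  show "subgroup (\<Union>n. wgen G S n) G" by (rule wgen_subgroup[OF assms(1)])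
  have "S \<subseteq> wgen G S 0" by (simp add: subset_insertI)
  then show "S \<subseteq> (\<Union>n. wgen G S n)" by blast
  have "|UNIV::nat set| \<le>o |S|" using assms(2) infinite_iff_card_of_nat by blast
  then show "|\<Union>n. wgen G S n| \<le>o |S|"
    using card_of_UNION_ordLeq_infinite[OF assms(2), of UNIV "wgen G S"] wgen_card[OF assms] by blast
qed


lemma extend_subgroup:
  assumes st: "stable |carrier G|" and D: "subgroup D G" "|D| <o |carrier G|"
    and g: "g \<in> carrier G" and M: "infinite M" "|D| \<le>o |M|" "|M| <o |carrier G|"
  shows "\<exists>D'. subgroup D' G \<and> D \<subseteq> D' \<and> g \<in> D' \<and> |D'| <o |carrier G| \<and> |(\<lambda>x. x <# D) ` D'| =o |M|"
proof -
  let ?Cos = "(\<lambda>x. x <# D) ` carrier G"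
  have cov: "(\<Union>C\<in>?Cos. C) = carrier G"
  proof
    show "carrier G \<subseteq> (\<Union>C\<in>?Cos. C)" using lc_self[OF D(1)] by blast
    show "(\<Union>C\<in>?Cos. C) \<subseteq> carrier G" using l_coset_subset_G[OF subgroup.subset[OF D(1)]] by blast
  qed
  have nl: "\<not> |?Cos| <o |carrier G|"
  proof
    assume a1: "|?Cos| <o |carrier G|"
    have a2: "\<forall>C\<in>?Cos. |C| <o |carrier G|"
    proof
      fix C assume "C \<in> ?Cos"
      then obtain x where "C = x <# D" by blast
      then show "|C| <o |carrier G|" using ordLeq_ordLess_trans[OF lc_card D(2)] by simp
    qed
    have "|\<Union>C\<in>?Cos. C| <o |carrier G|" using card_of_UNION_ordLess_infinite[OF st a1 a2] .
    then have "|carrier G| <o |carrier G|" by (simp only: cov)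
    then show False using ordLess_irreflexive by blast
  qed
  have "|carrier G| \<le>o |?Cos|"
    using not_ordLess_iff_ordLeq[OF card_of_Well_order card_of_Well_order, of "?Cos" "carrier G"] nl by blast
  then have "|M| \<le>o |?Cos|" using ordLeq_transitive[OF ordLess_imp_ordLeq[OF M(3)]] by blast
  then have "\<exists>j. inj_on j M \<and> j ` M \<subseteq> ?Cos" using card_of_ordLeq[of M ?Cos] by simp
  then obtain j where j: "inj_on j M" "j ` M \<subseteq> ?Cos" by blast
  define rep where "rep C = (SOME x. x \<in> carrier G \<and> C = x <# D)" for C
  have rep0: "rep C \<in> carrier G \<and> C = rep C <# D" if "C \<in> ?Cos" for C
  proof -
    from that obtain x where "x \<in> carrier G \<and> C = x <# D" by blast
    then show ?thesis unfolding rep_def by (rule someI)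
  qed
  have rep: "rep C \<in> carrier G" "C = rep C <# D" if "C \<in> ?Cos" for C using rep0[OF that] by auto
  let ?X = "rep ` j ` M"
  have injX: "inj_on (rep \<circ> j) M"
  proof (rule inj_onI)
    fix a b assume ab: "a \<in> M" "b \<in> M" "(rep \<circ> j) a = (rep \<circ> j) b"
    have ja: "j a \<in> ?Cos" "j b \<in> ?Cos" using ab j(2) by blast+
    have "j a = rep (j a) <# D" using rep(2)[OF ja(1)] .
    also have "\<dots> = rep (j b) <# D" using ab(3) by simp
    also have "\<dots> = j b" using rep(2)[OF ja(2)] by simp
    finally show "a = b" using j(1) ab by (meson inj_onD)
  qed
  then have "bij_betw (rep \<circ> j) M ?X" by (simp add: bij_betw_def image_comp)
  then have "|M| =o |?X|" using card_of_ordIso by blast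
  then have Xeq: "|?X| =o |M|" by (rule ordIso_symmetric)
  have Xc: "?X \<subseteq> carrier G"
  proof
    fix y assume "y \<in> ?X"
    then obtain m where m: "m \<in> M" "y = rep (j m)" by blast
    then have "j m \<in> ?Cos" using j(2) by blast
    then show "y \<in> carrier G" using rep(1) m(2) by blast
  qed
  let ?S = "insert g (D \<union> ?X)"
  have Sc: "?S \<subseteq> carrier G" using Xc g subgroup.subset[OF D(1)] by blast
  have "infinite ?X" using card_of_ordIso_finite[OF Xeq] M(1) by simp
  then have Sinf: "infinite ?S" by simp
  have "|?X| \<le>o |M|" using Xeq ordIso_iff_ordLeq by blast
  then have "|D \<union> ?X| \<le>o |M|" using card_Un_le_inf[OF M(1) M(2)] by blast
  moreover have "|{g}| \<le>o |M|" using M(1) by (intro card_of_singl_ordLeq) auto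
  ultimately have "|{g} \<union> (D \<union> ?X)| \<le>o |M|" using card_Un_le_inf[OF M(1)] by blast
  then have SM: "|?S| \<le>o |M|" by simp
  obtain K where K: "subgroup K G" "?S \<subseteq> K" "|K| \<le>o |?S|" using small_subgroup[OF Sc Sinf] by blast
  have KM: "|K| \<le>o |M|" using ordLeq_transitive[OF K(3) SM] .
  show ?thesis
  proof (intro exI conjI)
    show "subgroup K G" "D \<subseteq> K" "g \<in> K" using K by auto
    show "|K| <o |carrier G|" using ordLeq_ordLess_trans[OF KM M(3)] .
    have "j ` M \<subseteq> (\<lambda>x. x <# D) ` K"
    proof
      fix C assume C: "C \<in> j ` M"
      then have C1: "C \<in> ?Cos" using j(2) by blast
      have "rep C \<in> K" using C K(2) by blast
      then show "C \<in> (\<lambda>x. x <# D) ` K" using rep(2)[OF C1] by blast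
    qed
    then have "|j ` M| \<le>o |(\<lambda>x. x <# D) ` K|" by (rule card_of_mono1)
    moreover have "bij_betw j M (j ` M)" using j(1) by (simp add: bij_betw_def)
    then have "|M| =o |j ` M|" using card_of_ordIso by blast
    ultimately have 1: "|M| \<le>o |(\<lambda>x. x <# D) ` K|" using ordIso_ordLeq_trans by blast
    have "|(\<lambda>x. x <# D) ` K| \<le>o |K|" by (rule card_of_image)
    then have 2: "|(\<lambda>x. x <# D) ` K| \<le>o |M|" using ordLeq_transitive[OF _ KM] by blast
    show "|(\<lambda>x. x <# D) ` K| =o |M|" using 1 2 ordIso_iff_ordLeq by blast
  qed
qed

end


lemma extend_map:
  assumes G: "group G" and H: "group H"
  and D: "subgroup D G" "subgroup D' G" "D \<subseteq> D'"
  and E: "subgroup E H" "subgroup E' H" "E \<subseteq> E'"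
  and f: "bij_betw f D E"
  and c: "bij_betw c ((\<lambda>x. x <#\<^bsub>G\<^esub> D) ` D') ((\<lambda>y. y <#\<^bsub>H\<^esub> E) ` E')" "c D = E"
  shows "\<exists>f'. bij_betw f' D' E' \<and> (\<forall>x\<in>D. f' x = f x) \<and>
     (\<forall>K L. K \<subseteq> D \<longrightarrow> L \<subseteq> E \<longrightarrow>
        (\<forall>x\<in>D. \<forall>y\<in>D. (inv\<^bsub>G\<^esub> x \<otimes>\<^bsub>G\<^esub> y \<in> K \<longleftrightarrow> inv\<^bsub>H\<^esub> (f x) \<otimes>\<^bsub>H\<^esub> f y \<in> L)) \<longrightarrow>
        (\<forall>x\<in>D'. \<forall>y\<in>D'. (inv\<^bsub>G\<^esub> x \<otimes>\<^bsub>G\<^esub> y \<in> K \<longleftrightarrow> inv\<^bsub>H\<^esub> (f' x) \<otimes>\<^bsub>H\<^esub> f' y \<in> L)))"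
proof -
  interpret G: group G by (rule G)
  interpret H: group H by (rule H)
  let ?CD = "(\<lambda>x. x <#\<^bsub>G\<^esub> D) ` D'"
  let ?CE = "(\<lambda>y. y <#\<^bsub>H\<^esub> E) ` E'"
  have D'c: "x \<in> carrier G" if "x \<in> D'" for x using that subgroup.mem_carrier[OF D(2)] by blast
  have Dc: "x \<in> carrier G" if "x \<in> D" for x using that subgroup.mem_carrier[OF D(1)] by blast
  have E'c: "x \<in> carrier H" if "x \<in> E'" for x using that subgroup.mem_carrier[OF E(2)] by blast
  have Ec: "x \<in> carrier H" if "x \<in> E" for x using that subgroup.mem_carrier[OF E(1)] by blast
  define rD where "rD C = (if C = D then \<one>\<^bsub>G\<^esub> else SOME x. x \<in> D' \<and> C = x <#\<^bsub>G\<^esub> D)" for C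
  define rE where "rE C = (if C = E then \<one>\<^bsub>H\<^esub> else SOME x. x \<in> E' \<and> C = x <#\<^bsub>H\<^esub> E)" for C
  have rD: "rD C \<in> D' \<and> rD C <#\<^bsub>G\<^esub> D = C" if "C \<in> ?CD" for C
  proof (cases "C = D")
    case True
    then show ?thesis unfolding rD_def
      using subgroup.one_closed[OF D(2)] G.coset_join3[OF G.one_closed D(1) subgroup.one_closed[OF D(1)]] by simp
  next
    case False
    from that obtain x where x: "x \<in> D' \<and> C = x <#\<^bsub>G\<^esub> D" by blast
    have "(SOME y. y \<in> D' \<and> C = y <#\<^bsub>G\<^esub> D) \<in> D' \<and> C = (SOME y. y \<in> D' \<and> C = y <#\<^bsub>G\<^esub> D) <#\<^bsub>G\<^esub> D"
      using someI[of "\<lambda>y. y \<in> D' \<and> C = y <#\<^bsub>G\<^esub> D", OF x] .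
    then show ?thesis unfolding rD_def using False by simp
  qed
  have rE: "rE C \<in> E' \<and> rE C <#\<^bsub>H\<^esub> E = C" if "C \<in> ?CE" for C
  proof (cases "C = E")
    case True
    then show ?thesis unfolding rE_def
      using subgroup.one_closed[OF E(2)] H.coset_join3[OF H.one_closed E(1) subgroup.one_closed[OF E(1)]] by simp
  next
    case False
    from that obtain x where x: "x \<in> E' \<and> C = x <#\<^bsub>H\<^esub> E" by blast
    have "(SOME y. y \<in> E' \<and> C = y <#\<^bsub>H\<^esub> E) \<in> E' \<and> C = (SOME y. y \<in> E' \<and> C = y <#\<^bsub>H\<^esub> E) <#\<^bsub>H\<^esub> E"
      using someI[of "\<lambda>y. y \<in> E' \<and> C = y <#\<^bsub>H\<^esub> E", OF x] .
    then show ?thesis unfolding rE_def using False by simp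
  qed
  define f' where "f' x = rE (c (x <#\<^bsub>G\<^esub> D)) \<otimes>\<^bsub>H\<^esub> f (inv\<^bsub>G\<^esub> (rD (x <#\<^bsub>G\<^esub> D)) \<otimes>\<^bsub>G\<^esub> x)" for x
  have cD: "c C \<in> ?CE" if "C \<in> ?CD" for C using c(1) that bij_betwE by blast
  have u_in: "inv\<^bsub>G\<^esub> (rD (x <#\<^bsub>G\<^esub> D)) \<otimes>\<^bsub>G\<^esub> x \<in> D" if x: "x \<in> D'" for x
  proof -
    have C: "x <#\<^bsub>G\<^esub> D \<in> ?CD" using x by blast
    have "rD (x <#\<^bsub>G\<^esub> D) <#\<^bsub>G\<^esub> D = x <#\<^bsub>G\<^esub> D" using rD[OF C] by blast
    then show ?thesis using G.lc_eq[OF D(1) D'c D'c[OF x]] rD[OF C] by blast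
  qed
  have f'_in: "f' x \<in> E'" and f'_cos: "f' x <#\<^bsub>H\<^esub> E = c (x <#\<^bsub>G\<^esub> D)" if x: "x \<in> D'" for x
  proof -
    have C: "x <#\<^bsub>G\<^esub> D \<in> ?CD" using x by blast
    let ?s = "rE (c (x <#\<^bsub>G\<^esub> D))"
    have s: "?s \<in> E'" "?s <#\<^bsub>H\<^esub> E = c (x <#\<^bsub>G\<^esub> D)" using rE[OF cD[OF C]] by auto
    have fu: "f (inv\<^bsub>G\<^esub> (rD (x <#\<^bsub>G\<^esub> D)) \<otimes>\<^bsub>G\<^esub> x) \<in> E" using u_in[OF x] f bij_betwE by blast
    show "f' x \<in> E'" unfolding f'_def using s(1) fu E(3) subgroup.m_closed[OF E(2)] by blast
    have "f' x \<in> ?s <#\<^bsub>H\<^esub> E" unfolding f'_def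
      using fu s(1) E'c H.lc_mem[OF E(1)] Ec by (simp add: H.m_assoc[symmetric])
    then have "f' x <#\<^bsub>H\<^esub> E = ?s <#\<^bsub>H\<^esub> E" using H.l_repr_independence[OF _ E'c[OF s(1)] E(1)] by simp
    then show "f' x <#\<^bsub>H\<^esub> E = c (x <#\<^bsub>G\<^esub> D)" using s(2) by simp
  qed
  have cinj: "x <#\<^bsub>G\<^esub> D = y <#\<^bsub>G\<^esub> D" if "x \<in> D'" "y \<in> D'" "c (x <#\<^bsub>G\<^esub> D) = c (y <#\<^bsub>G\<^esub> D)" for x y
    using inj_onD[OF bij_betw_imp_inj_on[OF c(1)] that(3)] that(1,2) by blast
  have core: "inv\<^bsub>G\<^esub> x \<otimes>\<^bsub>G\<^esub> y = inv\<^bsub>G\<^esub> (inv\<^bsub>G\<^esub> (rD (x <#\<^bsub>G\<^esub> D)) \<otimes>\<^bsub>G\<^esub> x) \<otimes>\<^bsub>G\<^esub> (inv\<^bsub>G\<^esub> (rD (y <#\<^bsub>G\<^esub> D)) \<otimes>\<^bsub>G\<^esub> y)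
      \<and> inv\<^bsub>H\<^esub> (f' x) \<otimes>\<^bsub>H\<^esub> f' y = inv\<^bsub>H\<^esub> (f (inv\<^bsub>G\<^esub> (rD (x <#\<^bsub>G\<^esub> D)) \<otimes>\<^bsub>G\<^esub> x)) \<otimes>\<^bsub>H\<^esub> f (inv\<^bsub>G\<^esub> (rD (y <#\<^bsub>G\<^esub> D)) \<otimes>\<^bsub>G\<^esub> y)"
    if xy: "x \<in> D'" "y \<in> D'" "x <#\<^bsub>G\<^esub> D = y <#\<^bsub>G\<^esub> D" for x y
  proof -
    have C: "x <#\<^bsub>G\<^esub> D \<in> ?CD" using xy by blast
    define r where "r = rD (x <#\<^bsub>G\<^esub> D)"
    define s where "s = rE (c (x <#\<^bsub>G\<^esub> D))"
    have r: "r \<in> carrier G" using rD[OF C] D'c unfolding r_def by blast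
    have sc: "s \<in> carrier H" using rE[OF cD[OF C]] E'c unfolding s_def by blast
    have x: "x \<in> carrier G" and y: "y \<in> carrier G" using xy D'c by auto
    have fu: "f (inv\<^bsub>G\<^esub> r \<otimes>\<^bsub>G\<^esub> x) \<in> carrier H" "f (inv\<^bsub>G\<^esub> r \<otimes>\<^bsub>G\<^esub> y) \<in> carrier H"
      using u_in[OF xy(1)] u_in[OF xy(2)] xy(3) f bij_betwE Ec unfolding r_def by metis+
    have 1: "inv\<^bsub>G\<^esub> x \<otimes>\<^bsub>G\<^esub> y = inv\<^bsub>G\<^esub> (inv\<^bsub>G\<^esub> r \<otimes>\<^bsub>G\<^esub> x) \<otimes>\<^bsub>G\<^esub> (inv\<^bsub>G\<^esub> r \<otimes>\<^bsub>G\<^esub> y)"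
      using r x y by (simp add: G.inv_mult_group G.m_assoc[symmetric]) (simp add: G.m_assoc)
    have 2: "inv\<^bsub>H\<^esub> (s \<otimes>\<^bsub>H\<^esub> a) \<otimes>\<^bsub>H\<^esub> (s \<otimes>\<^bsub>H\<^esub> b) = inv\<^bsub>H\<^esub> a \<otimes>\<^bsub>H\<^esub> b" if "a \<in> carrier H" "b \<in> carrier H" for a b
      using that sc by (simp add: H.inv_mult_group H.m_assoc[symmetric]) (simp add: H.m_assoc)
    show ?thesis using 1 2[OF fu] xy(3) unfolding f'_def r_def s_def by simp
  qed
  have coh: "\<forall>K L. K \<subseteq> D \<longrightarrow> L \<subseteq> E \<longrightarrow>
        (\<forall>x\<in>D. \<forall>y\<in>D. (inv\<^bsub>G\<^esub> x \<otimes>\<^bsub>G\<^esub> y \<in> K \<longleftrightarrow> inv\<^bsub>H\<^esub> (f x) \<otimes>\<^bsub>H\<^esub> f y \<in> L)) \<longrightarrow>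
        (\<forall>x\<in>D'. \<forall>y\<in>D'. (inv\<^bsub>G\<^esub> x \<otimes>\<^bsub>G\<^esub> y \<in> K \<longleftrightarrow> inv\<^bsub>H\<^esub> (f' x) \<otimes>\<^bsub>H\<^esub> f' y \<in> L))"
  proof (intro allI impI ballI)
    fix K L x y
    assume KL: "K \<subseteq> D" "L \<subseteq> E" and hyp: "\<forall>x\<in>D. \<forall>y\<in>D. (inv\<^bsub>G\<^esub> x \<otimes>\<^bsub>G\<^esub> y \<in> K \<longleftrightarrow> inv\<^bsub>H\<^esub> (f x) \<otimes>\<^bsub>H\<^esub> f y \<in> L)"
      and xy: "x \<in> D'" "y \<in> D'"
    show "inv\<^bsub>G\<^esub> x \<otimes>\<^bsub>G\<^esub> y \<in> K \<longleftrightarrow> inv\<^bsub>H\<^esub> (f' x) \<otimes>\<^bsub>H\<^esub> f' y \<in> L"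
    proof (cases "x <#\<^bsub>G\<^esub> D = y <#\<^bsub>G\<^esub> D")
      case True
      have uv: "inv\<^bsub>G\<^esub> (rD (x <#\<^bsub>G\<^esub> D)) \<otimes>\<^bsub>G\<^esub> x \<in> D" "inv\<^bsub>G\<^esub> (rD (y <#\<^bsub>G\<^esub> D)) \<otimes>\<^bsub>G\<^esub> y \<in> D"
        using u_in xy by auto
      show ?thesis using core[OF xy True] hyp uv by simp
    next
      case False
      have l: "inv\<^bsub>G\<^esub> x \<otimes>\<^bsub>G\<^esub> y \<notin> K" using False KL(1) G.lc_eq[OF D(1) D'c[OF xy(1)] D'c[OF xy(2)]] by blast
      have "f' x <#\<^bsub>H\<^esub> E \<noteq> f' y <#\<^bsub>H\<^esub> E" using False cinj xy f'_cos by metis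
      then have "inv\<^bsub>H\<^esub> (f' x) \<otimes>\<^bsub>H\<^esub> f' y \<notin> L"
        using KL(2) H.lc_eq[OF E(1) E'c[OF f'_in[OF xy(1)]] E'c[OF f'_in[OF xy(2)]]] by blast
      then show ?thesis using l by blast
    qed
  qed
  have agree: "f' x = f x" if x: "x \<in> D" for x
  proof -
    have "x <#\<^bsub>G\<^esub> D = D" using G.coset_join3[OF Dc[OF x] D(1) x] .
    moreover have "f x \<in> carrier H" using f x bij_betwE Ec by metis
    ultimately show ?thesis unfolding f'_def rD_def rE_def using c(2) Dc[OF x] by simp
  qed
  have inj: "inj_on f' D'"
  proof (rule inj_onI)
    fix x y assume xy: "x \<in> D'" "y \<in> D'" "f' x = f' y"
    then have eq: "x <#\<^bsub>G\<^esub> D = y <#\<^bsub>G\<^esub> D" using cinj f'_cos by metis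
    have "inv\<^bsub>H\<^esub> (f' x) \<otimes>\<^bsub>H\<^esub> f' y = \<one>\<^bsub>H\<^esub>" using xy f'_in E'c by simp
    then have "inv\<^bsub>H\<^esub> (f (inv\<^bsub>G\<^esub> (rD (x <#\<^bsub>G\<^esub> D)) \<otimes>\<^bsub>G\<^esub> x)) \<otimes>\<^bsub>H\<^esub> f (inv\<^bsub>G\<^esub> (rD (x <#\<^bsub>G\<^esub> D)) \<otimes>\<^bsub>G\<^esub> y) = \<one>\<^bsub>H\<^esub>"
      using core[OF xy(1,2) eq] eq by simp
    moreover have "f (inv\<^bsub>G\<^esub> (rD (x <#\<^bsub>G\<^esub> D)) \<otimes>\<^bsub>G\<^esub> x) \<in> carrier H" "f (inv\<^bsub>G\<^esub> (rD (x <#\<^bsub>G\<^esub> D)) \<otimes>\<^bsub>G\<^esub> y) \<in> carrier H"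
      using u_in[OF xy(1)] u_in[OF xy(2)] eq f bij_betwE Ec by metis+
    ultimately have "f (inv\<^bsub>G\<^esub> (rD (x <#\<^bsub>G\<^esub> D)) \<otimes>\<^bsub>G\<^esub> x) = f (inv\<^bsub>G\<^esub> (rD (x <#\<^bsub>G\<^esub> D)) \<otimes>\<^bsub>G\<^esub> y)"
      by (metis H.inv_equality H.inv_inv H.inv_closed)
    then have "inv\<^bsub>G\<^esub> (rD (x <#\<^bsub>G\<^esub> D)) \<otimes>\<^bsub>G\<^esub> x = inv\<^bsub>G\<^esub> (rD (x <#\<^bsub>G\<^esub> D)) \<otimes>\<^bsub>G\<^esub> y"
      using inj_onD[OF bij_betw_imp_inj_on[OF f]] u_in[OF xy(1)] u_in[OF xy(2)] eq by metis
    moreover have "rD (x <#\<^bsub>G\<^esub> D) \<in> carrier G" using rD xy(1) D'c by blast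
    ultimately show "x = y" using xy D'c by (metis G.Units_l_cancel G.Units_eq G.inv_closed)
  qed
  have surj: "E' \<subseteq> f' ` D'"
  proof
    fix y assume y: "y \<in> E'"
    let ?C' = "y <#\<^bsub>H\<^esub> E"
    have C': "?C' \<in> ?CE" using y by blast
    define C where "C = inv_into ?CD c ?C'"
    have C: "C \<in> ?CD" "c C = ?C'" unfolding C_def
      using bij_betw_inv_into_right[OF c(1) C'] inv_into_into[of ?C' c ?CD] C' c(1) by (auto simp: bij_betw_def)
    define r where "r = rD C"
    define s where "s = rE ?C'"
    have r: "r \<in> D'" "r <#\<^bsub>G\<^esub> D = C" using rD[OF C(1)] unfolding r_def by auto
    have s: "s \<in> E'" "s <#\<^bsub>H\<^esub> E = ?C'" using rE[OF C'] unfolding s_def by auto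
    define e where "e = inv\<^bsub>H\<^esub> s \<otimes>\<^bsub>H\<^esub> y"
    have e: "e \<in> E" using s H.lc_eq[OF E(1) E'c[OF s(1)] E'c[OF y]] unfolding e_def by blast
    define u where "u = inv_into D f e"
    have u: "u \<in> D" "f u = e" unfolding u_def using e f
      by (auto simp: bij_betw_def inv_into_into f_inv_into_f)
    define x where "x = r \<otimes>\<^bsub>G\<^esub> u"
    have rc: "r \<in> carrier G" using r D'c by blast
    have uc: "u \<in> carrier G" using u Dc by blast
    have x: "x \<in> D'" unfolding x_def using r(1) u(1) D(3) subgroup.m_closed[OF D(2)] by blast
    have "inv\<^bsub>G\<^esub> r \<otimes>\<^bsub>G\<^esub> x = u" unfolding x_def using rc uc by (simp add: G.m_assoc[symmetric])
    then have "r <#\<^bsub>G\<^esub> D = x <#\<^bsub>G\<^esub> D" using G.lc_eq[OF D(1) rc D'c[OF x]] u(1) by simp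
    then have xC: "x <#\<^bsub>G\<^esub> D = C" using r(2) by simp
    have "f' x = s \<otimes>\<^bsub>H\<^esub> f (inv\<^bsub>G\<^esub> r \<otimes>\<^bsub>G\<^esub> x)" unfolding f'_def xC C(2) r_def s_def ..
    also have "\<dots> = s \<otimes>\<^bsub>H\<^esub> e" using \<open>inv\<^bsub>G\<^esub> r \<otimes>\<^bsub>G\<^esub> x = u\<close> u(2) by simp
    also have "\<dots> = y" unfolding e_def using E'c s(1) y by (simp add: H.m_assoc[symmetric])
    finally show "y \<in> f' ` D'" using x by (metis image_eqI)
  qed
  have "bij_betw f' D' E'" unfolding bij_betw_def using inj surj f'_in by blast
  then show ?thesis using agree coh by blast
qed



lemma fin_less: "finite A \<Longrightarrow> infinite X \<Longrightarrow> |A| <o |X|"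
  by (rule finite_ordLess_infinite[OF card_of_Well_order card_of_Well_order]) (auto simp: Field_card_of)

lemma less_not_eq: "|A| <o |X| \<Longrightarrow> A \<noteq> X"
  using ordLess_irreflexive by blast

lemma chain_small:
  fixes X :: "'a set" and Ks :: "'a set set"
  assumes st: "stable |X|" and inf: "infinite X"
    and sub: "\<And>K. K \<in> Ks \<Longrightarrow> K \<subseteq> X \<and> |K| <o |X|"
    and ch: "\<And>K K'. K \<in> Ks \<Longrightarrow> K' \<in> Ks \<Longrightarrow> K \<subseteq> K' \<or> K' \<subseteq> K"
    and mc: "\<And>K K'. K \<in> Ks \<Longrightarrow> K' \<in> Ks \<Longrightarrow> K \<subset> K' \<Longrightarrow> wo_rel.minim |X| (X - K) \<in> K'"
    and ne: "\<Union>Ks \<noteq> X"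
  shows "|\<Union>Ks| <o |X|"
proof -
  have wo: "wo_rel |X|" unfolding wo_rel_def by (rule card_of_Well_order)
  have F: "Field |X| = X" by (rule Field_card_of)
  let ?mn = "\<lambda>K. wo_rel.minim |X| (X - K)"
  have UX: "\<Union>Ks \<subseteq> X" using sub by blast
  then have neU: "X - \<Union>Ks \<noteq> {}" using ne by blast
  define m where "m = ?mn (\<Union>Ks)"
  have m: "m \<in> X - \<Union>Ks" unfolding m_def using wo_rel.minim_in[OF wo, of "X - \<Union>Ks"] F neU by blast
  have mK: "?mn K \<in> X - K" if K: "K \<in> Ks" for K
  proof -
    have "K \<noteq> X" using less_not_eq[of K X] sub[OF K] by blast
    then have "X - K \<noteq> {}" using sub[OF K] by blast
    then show ?thesis using wo_rel.minim_in[OF wo, of "X - K"] F by blast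
  qed
  have le: "(?mn K, m) \<in> |X|" if K: "K \<in> Ks" for K
    using wo_rel.minim_least[OF wo, of "X - K" m] F m K by blast
  have img: "?mn ` Ks \<subseteq> insert m (underS |X| m)"
  proof
    fix z assume "z \<in> ?mn ` Ks"
    then obtain K where K: "K \<in> Ks" "z = ?mn K" by blast
    show "z \<in> insert m (underS |X| m)"
    proof (cases "z = m")
      case False
      then show ?thesis using le[OF K(1)] K(2) unfolding underS_def by blast
    qed simp
  qed
  have inj: "inj_on ?mn Ks"
  proof (rule inj_onI)
    fix K K' assume KK: "K \<in> Ks" "K' \<in> Ks" "?mn K = ?mn K'"
    show "K = K'"
    proof (rule ccontr)
      assume "K \<noteq> K'"
      then have "K \<subset> K' \<or> K' \<subset> K" using ch[OF KK(1,2)] by blast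
      then show False
      proof
        assume "K \<subset> K'" then have "?mn K \<in> K'" using mc[OF KK(1,2)] by blast
        then show False using mK[OF KK(2)] KK(3) by simp
      next
        assume "K' \<subset> K" then have "?mn K' \<in> K" using mc[OF KK(2,1)] by blast
        then show False using mK[OF KK(1)] KK(3) by simp
      qed
    qed
  qed
  have mX: "m \<in> Field |X|" using m F by blast
  have us: "|underS |X| m| <o |X|" using card_of_underS[OF card_of_Card_order mX] .
  have "|{m}| <o |X|" using fin_less[OF finite.insertI[OF finite.emptyI] inf] .
  then have "|{m} \<union> underS |X| m| <o |X|" by (rule card_of_Un_ordLess_infinite[OF inf _ us])
  then have ins: "|insert m (underS |X| m)| <o |X|" by simp
  have "\<exists>f. inj_on f Ks \<and> f ` Ks \<subseteq> insert m (underS |X| m)"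
    using inj img by (intro exI[of _ ?mn]) simp
  then have "|Ks| \<le>o |insert m (underS |X| m)|" by (rule card_of_ordLeq[THEN iffD1])
  then have Ks: "|Ks| <o |X|" using ins by (rule ordLeq_ordLess_trans)
  have "\<forall>K\<in>Ks. |K| <o |X|" using sub by simp
  then have "|\<Union>K\<in>Ks. K| <o |X|" by (rule card_of_UNION_ordLess_infinite[OF st Ks])
  then show ?thesis by simp
qed

lemma chain_cover:
  fixes X :: "'a set" and Ks :: "'a set set"
  assumes st: "stable |X|"
    and sub: "\<And>K. K \<in> Ks \<Longrightarrow> |K| <o |X|"
    and ch: "\<And>K K'. K \<in> Ks \<Longrightarrow> K' \<in> Ks \<Longrightarrow> K \<subseteq> K' \<or> K' \<subseteq> K"
    and U: "\<Union>Ks = X" and A: "A \<subseteq> X" "|A| <o |X|"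
  shows "\<exists>K\<in>Ks. A \<subseteq> K"
proof (rule ccontr)
  assume nc: "\<not> (\<exists>K\<in>Ks. A \<subseteq> K)"
  have "\<forall>a\<in>A. \<exists>K. K \<in> Ks \<and> a \<in> K" using A(1) U by blast
  then obtain Ka where Ka: "\<forall>a\<in>A. Ka a \<in> Ks \<and> a \<in> Ka a"
    using bchoice[of A "\<lambda>a K. K \<in> Ks \<and> a \<in> K"] by blast
  have cov: "X \<subseteq> (\<Union>a\<in>A. Ka a)"
  proof
    fix x assume "x \<in> X"
    then obtain K where K: "K \<in> Ks" "x \<in> K" using U by blast
    have "\<not> A \<subseteq> K" using nc K(1) by blast
    then obtain a where a: "a \<in> A" "a \<notin> K" by blast
    then have "\<not> Ka a \<subseteq> K" using Ka by blast
    then have "K \<subseteq> Ka a" using ch[OF K(1)] Ka a(1) by blast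
    then show "x \<in> (\<Union>a\<in>A. Ka a)" using K(2) a(1) by blast
  qed
  have "\<forall>a\<in>A. |Ka a| <o |X|" using Ka sub by simp
  then have "|\<Union>a\<in>A. Ka a| <o |X|" by (rule card_of_UNION_ordLess_infinite[OF st A(2)])
  moreover have "|X| \<le>o |\<Union>a\<in>A. Ka a|" using cov by (rule card_of_mono1)
  ultimately have "|X| <o |X|" by (rule ordLeq_ordLess_trans[rotated])
  then show False using ordLess_irreflexive by blast
qed



locale setting =
  fixes G :: "('a, 'm) monoid_scheme" and H :: "('b, 'n) monoid_scheme"
  assumes grG: "group G" and grH: "group H"
    and stG: "stable |carrier G|" and stH: "stable |carrier H|"
    and iso: "|carrier G| =o |carrier H|"
    and uncG: "|UNIV::nat set| <o |carrier G|" and uncH: "|UNIV::nat set| <o |carrier H|"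
begin

interpretation G: group G by (rule grG)
interpretation H: group H by (rule grH)

lemma infG: "infinite (carrier G)"
  using uncG infinite_iff_card_of_nat ordLess_imp_ordLeq by blast
lemma infH: "infinite (carrier H)"
  using uncH infinite_iff_card_of_nat ordLess_imp_ordLeq by blast

definition good :: "'a set \<Rightarrow> 'b set \<Rightarrow> ('a \<Rightarrow> 'b) \<Rightarrow> bool" where
  "good K L \<phi> \<longleftrightarrow> subgroup K G \<and> subgroup L H \<and> |K| <o |carrier G| \<and> bij_betw \<phi> K L"

definition mG :: "'a set \<Rightarrow> 'a" where "mG K = wo_rel.minim |carrier G| (carrier G - K)"
definition mH :: "'b set \<Rightarrow> 'b" where "mH L = wo_rel.minim |carrier H| (carrier H - L)"

definition compat :: "'a set \<Rightarrow> 'b set \<Rightarrow> ('a \<Rightarrow> 'b) \<Rightarrow> 'a set \<Rightarrow> 'b set \<Rightarrow> ('a \<Rightarrow> 'b) \<Rightarrow> bool" where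
  "compat K L \<phi> K' L' \<phi>' \<longleftrightarrow> (K \<subseteq> K' \<or> K' \<subseteq> K) \<and>
     (K \<subseteq> K' \<longrightarrow> L \<subseteq> L' \<and> (\<forall>x\<in>K. \<phi>' x = \<phi> x) \<and>
        (\<forall>x\<in>K'. \<forall>y\<in>K'. (inv\<^bsub>G\<^esub> x \<otimes>\<^bsub>G\<^esub> y \<in> K \<longleftrightarrow> inv\<^bsub>H\<^esub> (\<phi>' x) \<otimes>\<^bsub>H\<^esub> \<phi>' y \<in> L)) \<and>
        (K \<noteq> K' \<longrightarrow> mG K \<in> K' \<and> mH L \<in> L'))"

definition base :: "'a set \<times> 'b set \<times> ('a \<Rightarrow> 'b)" where
  "base = ({\<one>\<^bsub>G\<^esub>}, {\<one>\<^bsub>H\<^esub>}, \<lambda>_. \<one>\<^bsub>H\<^esub>)"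

definition valid :: "('a set \<times> 'b set \<times> ('a \<Rightarrow> 'b)) set \<Rightarrow> bool" where
  "valid S \<longleftrightarrow> base \<in> S \<and> (\<forall>K L \<phi>. (K,L,\<phi>) \<in> S \<longrightarrow> good K L \<phi>) \<and>
     (\<forall>K L \<phi> K' L' \<phi>'. (K,L,\<phi>) \<in> S \<longrightarrow> (K',L',\<phi>') \<in> S \<longrightarrow> compat K L \<phi> K' L' \<phi>')"

definition Dom :: "('a set \<times> 'b set \<times> ('a \<Rightarrow> 'b)) set \<Rightarrow> 'a set" where
  "Dom S = {x. \<exists>K L \<phi>. (K,L,\<phi>) \<in> S \<and> x \<in> K}"
definition Rng :: "('a set \<times> 'b set \<times> ('a \<Rightarrow> 'b)) set \<Rightarrow> 'b set" where
  "Rng S = {y. \<exists>K L \<phi>. (K,L,\<phi>) \<in> S \<and> y \<in> L}"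
definition F :: "('a set \<times> 'b set \<times> ('a \<Rightarrow> 'b)) set \<Rightarrow> 'a \<Rightarrow> 'b" where
  "F S x = (SOME y. \<exists>K L \<phi>. (K,L,\<phi>) \<in> S \<and> x \<in> K \<and> y = \<phi> x)"

lemma good_K: "good K L \<phi> \<Longrightarrow> subgroup K G" by (simp add: good_def)
lemma good_L: "good K L \<phi> \<Longrightarrow> subgroup L H" by (simp add: good_def)
lemma good_card: "good K L \<phi> \<Longrightarrow> |K| <o |carrier G|" by (simp add: good_def)
lemma good_bij: "good K L \<phi> \<Longrightarrow> bij_betw \<phi> K L" by (simp add: good_def)

lemma vbase: "valid S \<Longrightarrow> base \<in> S"
  unfolding valid_def by (rule conjunct1)

lemma vgood: "valid S \<Longrightarrow> (K,L,\<phi>) \<in> S \<Longrightarrow> good K L \<phi>"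
  unfolding valid_def by blast
lemma vcomp: "valid S \<Longrightarrow> (K,L,\<phi>) \<in> S \<Longrightarrow> (K',L',\<phi>') \<in> S \<Longrightarrow> compat K L \<phi> K' L' \<phi>'"
  unfolding valid_def by blast
lemma vchain: "valid S \<Longrightarrow> (K,L,\<phi>) \<in> S \<Longrightarrow> (K',L',\<phi>') \<in> S \<Longrightarrow> K \<subseteq> K' \<or> K' \<subseteq> K"
  using vcomp unfolding compat_def by blast
lemma vsub: "valid S \<Longrightarrow> (K,L,\<phi>) \<in> S \<Longrightarrow> (K',L',\<phi>') \<in> S \<Longrightarrow> K \<subseteq> K' \<Longrightarrow>
   L \<subseteq> L' \<and> (\<forall>x\<in>K. \<phi>' x = \<phi> x) \<and>
        (\<forall>x\<in>K'. \<forall>y\<in>K'. (inv\<^bsub>G\<^esub> x \<otimes>\<^bsub>G\<^esub> y \<in> K \<longleftrightarrow> inv\<^bsub>H\<^esub> (\<phi>' x) \<otimes>\<^bsub>H\<^esub> \<phi>' y \<in> L)) \<and>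
        (K \<noteq> K' \<longrightarrow> mG K \<in> K' \<and> mH L \<in> L')"
  using vcomp unfolding compat_def by blast

lemma Fval: assumes "valid S" "(K,L,\<phi>) \<in> S" "x \<in> K" shows "F S x = \<phi> x"
proof -
  have "\<exists>y. \<exists>K L \<phi>. (K,L,\<phi>) \<in> S \<and> x \<in> K \<and> y = \<phi> x" using assms by blast
  then obtain K2 L2 \<phi>2 where 2: "(K2,L2,\<phi>2) \<in> S" "x \<in> K2" "F S x = \<phi>2 x"
    unfolding F_def by (smt (verit) someI_ex)
  show ?thesis
  proof (cases "K \<subseteq> K2")
    case True then show ?thesis using vsub[OF assms(1,2) 2(1)] assms(3) 2(3) by simp
  next
    case False then have "K2 \<subseteq> K" using vchain[OF assms(1,2) 2(1)] by blast
    then show ?thesis using vsub[OF assms(1) 2(1) assms(2)] 2 by simp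
  qed
qed

lemma upper2: assumes "valid S" "(K1,L1,\<phi>1) \<in> S" "(K2,L2,\<phi>2) \<in> S"
  shows "\<exists>K L \<phi>. (K,L,\<phi>) \<in> S \<and> K1 \<subseteq> K \<and> K2 \<subseteq> K"
  using vchain[OF assms] assms(2,3) by blast

lemma Fcoh: assumes v: "valid S" and t: "(K,L,\<phi>) \<in> S" and xy: "x \<in> Dom S" "y \<in> Dom S"
  shows "inv\<^bsub>G\<^esub> x \<otimes>\<^bsub>G\<^esub> y \<in> K \<longleftrightarrow> inv\<^bsub>H\<^esub> (F S x) \<otimes>\<^bsub>H\<^esub> F S y \<in> L"
proof -
  obtain Kx Lx \<phi>x Ky Ly \<phi>y where tx: "(Kx,Lx,\<phi>x) \<in> S" "x \<in> Kx" and ty: "(Ky,Ly,\<phi>y) \<in> S" "y \<in> Ky"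
    using xy unfolding Dom_def by blast
  obtain K1 L1 \<phi>1 where t1: "(K1,L1,\<phi>1) \<in> S" "Kx \<subseteq> K1" "Ky \<subseteq> K1" using upper2[OF v tx(1) ty(1)] by blast
  obtain K2 L2 \<phi>2 where t2: "(K2,L2,\<phi>2) \<in> S" "K1 \<subseteq> K2" "K \<subseteq> K2" using upper2[OF v t1(1) t] by blast
  have x2: "x \<in> K2" and y2: "y \<in> K2" using tx ty t1 t2 by blast+
  have "F S x = \<phi>2 x" "F S y = \<phi>2 y" using Fval[OF v t2(1)] x2 y2 by auto
  then show ?thesis using vsub[OF v t t2(1) t2(3)] x2 y2 by simp
qed

lemma Dom_sub: assumes v: "valid S" shows "subgroup (Dom S) G"
proof (rule G.subgroupI)
  show "Dom S \<subseteq> carrier G"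
  proof
    fix z assume "z \<in> Dom S"
    then obtain K L \<phi> where t: "(K,L,\<phi>) \<in> S" "z \<in> K" unfolding Dom_def by blast
    have "subgroup K G" using good_K[OF vgood[OF v t(1)]] .
    then show "z \<in> carrier G" using t(2) by (rule subgroup.mem_carrier)
  qed
  have "base \<in> S" using vbase[OF v] .
  then have "\<one>\<^bsub>G\<^esub> \<in> Dom S" unfolding Dom_def base_def by blast
  then show "Dom S \<noteq> {}" by blast
  show "inv\<^bsub>G\<^esub> a \<in> Dom S" if aa: "a \<in> Dom S" for a
  proof -
    obtain K L \<phi> where t: "(K,L,\<phi>) \<in> S" "a \<in> K" using aa unfolding Dom_def by blast
    have "subgroup K G" using good_K[OF vgood[OF v t(1)]] .
    then have "inv\<^bsub>G\<^esub> a \<in> K" using t(2) by (rule subgroup.m_inv_closed)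
    then show ?thesis using t(1) unfolding Dom_def by blast
  qed
  show "a \<otimes>\<^bsub>G\<^esub> b \<in> Dom S" if ab: "a \<in> Dom S" "b \<in> Dom S" for a b
  proof -
    obtain K L \<phi> K' L' \<phi>' where t: "(K,L,\<phi>) \<in> S" "a \<in> K" "(K',L',\<phi>') \<in> S" "b \<in> K'"
      using ab unfolding Dom_def by blast
    obtain K2 L2 \<phi>2 where t2: "(K2,L2,\<phi>2) \<in> S" "K \<subseteq> K2" "K' \<subseteq> K2" using upper2[OF v t(1) t(3)] by blast
    have "subgroup K2 G" using good_K[OF vgood[OF v t2(1)]] .
    moreover have "a \<in> K2" "b \<in> K2" using t t2 by blast+
    ultimately have "a \<otimes>\<^bsub>G\<^esub> b \<in> K2" by (rule subgroup.m_closed)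
    then show ?thesis using t2(1) unfolding Dom_def by blast
  qed
qed

lemma Lchain: assumes v: "valid S" "(K,L,\<phi>) \<in> S" "(K',L',\<phi>') \<in> S" shows "L \<subseteq> L' \<or> L' \<subseteq> L"
  using vchain[OF v] vsub[OF v(1,2,3)] vsub[OF v(1,3,2)] by blast

lemma Rng_sub: assumes v: "valid S" shows "subgroup (Rng S) H"
proof (rule H.subgroupI)
  show "Rng S \<subseteq> carrier H"
  proof
    fix z assume "z \<in> Rng S"
    then obtain K L \<phi> where t: "(K,L,\<phi>) \<in> S" "z \<in> L" unfolding Rng_def by blast
    have "subgroup L H" using good_L[OF vgood[OF v t(1)]] .
    then show "z \<in> carrier H" using t(2) by (rule subgroup.mem_carrier)
  qed
  have "base \<in> S" using vbase[OF v] .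
  then have "\<one>\<^bsub>H\<^esub> \<in> Rng S" unfolding Rng_def base_def by blast
  then show "Rng S \<noteq> {}" by blast
  show "inv\<^bsub>H\<^esub> a \<in> Rng S" if aa: "a \<in> Rng S" for a
  proof -
    obtain K L \<phi> where t: "(K,L,\<phi>) \<in> S" "a \<in> L" using aa unfolding Rng_def by blast
    have "subgroup L H" using good_L[OF vgood[OF v t(1)]] .
    then have "inv\<^bsub>H\<^esub> a \<in> L" using t(2) by (rule subgroup.m_inv_closed)
    then show ?thesis using t(1) unfolding Rng_def by blast
  qed
  show "a \<otimes>\<^bsub>H\<^esub> b \<in> Rng S" if ab: "a \<in> Rng S" "b \<in> Rng S" for a b
  proof -
    obtain K L \<phi> K' L' \<phi>' where t: "(K,L,\<phi>) \<in> S" "a \<in> L" "(K',L',\<phi>') \<in> S" "b \<in> L'"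
      using ab unfolding Rng_def by blast
    have "L \<subseteq> L' \<or> L' \<subseteq> L" using Lchain[OF v t(1) t(3)] .
    moreover have LL: "subgroup L H" "subgroup L' H" using good_L[OF vgood[OF v t(1)]] good_L[OF vgood[OF v t(3)]] .
    ultimately have "a \<otimes>\<^bsub>H\<^esub> b \<in> L \<or> a \<otimes>\<^bsub>H\<^esub> b \<in> L'"
      using t subgroup.m_closed[OF LL(1)] subgroup.m_closed[OF LL(2)] by blast
    then show ?thesis using t unfolding Rng_def by blast
  qed
qed

lemma F_bij: assumes v: "valid S" shows "bij_betw (F S) (Dom S) (Rng S)"
  unfolding bij_betw_def
proof (intro conjI)
  show "inj_on (F S) (Dom S)"
  proof (rule inj_onI)
    fix x y assume xy: "x \<in> Dom S" "y \<in> Dom S" "F S x = F S y"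
    obtain Kx Lx \<phi>x Ky Ly \<phi>y where tx: "(Kx,Lx,\<phi>x) \<in> S" "x \<in> Kx" and ty: "(Ky,Ly,\<phi>y) \<in> S" "y \<in> Ky"
      using xy unfolding Dom_def by blast
    obtain K1 L1 \<phi>1 where t1: "(K1,L1,\<phi>1) \<in> S" "Kx \<subseteq> K1" "Ky \<subseteq> K1" using upper2[OF v tx(1) ty(1)] by blast
    have "x \<in> K1" "y \<in> K1" using tx ty t1 by blast+
    moreover have "\<phi>1 x = \<phi>1 y" using Fval[OF v t1(1)] xy(3) calculation by simp
    moreover have "inj_on \<phi>1 K1" using bij_betw_imp_inj_on[OF good_bij[OF vgood[OF v t1(1)]]] .
    ultimately show "x = y" by (meson inj_onD)
  qed
  show "F S ` Dom S = Rng S"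
  proof
    show "F S ` Dom S \<subseteq> Rng S"
    proof
      fix z assume "z \<in> F S ` Dom S"
      then obtain x K L \<phi> where t: "(K,L,\<phi>) \<in> S" "x \<in> K" "z = F S x" unfolding Dom_def by blast
      then have "z = \<phi> x" using Fval[OF v] by simp
      moreover have "\<phi> x \<in> L" using bij_betwE[OF good_bij[OF vgood[OF v t(1)]]] t(2) by blast
      ultimately show "z \<in> Rng S" using t(1) unfolding Rng_def by blast
    qed
    show "Rng S \<subseteq> F S ` Dom S"
    proof
      fix z assume "z \<in> Rng S"
      then obtain K L \<phi> where t: "(K,L,\<phi>) \<in> S" "z \<in> L" unfolding Rng_def by blast
      have "\<phi> ` K = L" using good_bij[OF vgood[OF v t(1)]] by (simp add: bij_betw_def)
      then obtain x where x: "x \<in> K" "z = \<phi> x" using t(2) by blast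
      then have "z = F S x" using Fval[OF v t(1)] by simp
      moreover have "x \<in> Dom S" using t(1) x(1) unfolding Dom_def by blast
      ultimately show "z \<in> F S ` Dom S" by blast
    qed
  qed
qed

lemma L_small: assumes v: "valid S" "(K,L,\<phi>) \<in> S" shows "|L| <o |carrier H|"
proof -
  have g: "good K L \<phi>" using vgood[OF v] .
  then have "|K| =o |L|" using good_bij card_of_ordIso by blast
  then have "|L| =o |K|" by (rule ordIso_symmetric)
  moreover have "|K| <o |carrier H|" using ordLess_ordIso_trans[OF good_card[OF g] iso] .
  ultimately show ?thesis by (rule ordIso_ordLess_trans)
qed

end


context setting begin

interpretation G: group G by (rule grG)
interpretation H: group H by (rule grH)

lemma valid_base: "valid {base}"
proof -
  have g: "good {\<one>\<^bsub>G\<^esub>} {\<one>\<^bsub>H\<^esub>} (\<lambda>_. \<one>\<^bsub>H\<^esub>)"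
    unfolding good_def
  proof (intro conjI)
    show "subgroup {\<one>\<^bsub>G\<^esub>} G" by (rule G.triv_subgroup)
    show "subgroup {\<one>\<^bsub>H\<^esub>} H" by (rule H.triv_subgroup)
    show "|{\<one>\<^bsub>G\<^esub>}| <o |carrier G|" using fin_less[OF finite.insertI[OF finite.emptyI] infG] .
    show "bij_betw (\<lambda>_. \<one>\<^bsub>H\<^esub>) {\<one>\<^bsub>G\<^esub>} {\<one>\<^bsub>H\<^esub>}" by (simp add: bij_betw_def)
  qed
  have c: "compat {\<one>\<^bsub>G\<^esub>} {\<one>\<^bsub>H\<^esub>} (\<lambda>_. \<one>\<^bsub>H\<^esub>) {\<one>\<^bsub>G\<^esub>} {\<one>\<^bsub>H\<^esub>} (\<lambda>_. \<one>\<^bsub>H\<^esub>)"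
    unfolding compat_def by simp
  show ?thesis unfolding valid_def base_def using g c by simp
qed

lemma zorn: "\<exists>M. valid M \<and> (\<forall>S. valid S \<longrightarrow> M \<subseteq> S \<longrightarrow> S = M)"
proof -
  have "\<exists>M\<in>{S. valid S}. \<forall>X\<in>{S. valid S}. M \<subseteq> X \<longrightarrow> X = M"
  proof (rule subset_Zorn_nonempty)
    show "{S. valid S} \<noteq> {}" using valid_base by blast
    fix C assume Cne: "C \<noteq> {}" and ch: "subset.chain {S. valid S} C"
    have Cv: "\<And>S. S \<in> C \<Longrightarrow> valid S" using ch unfolding subset.chain_def by blast
    have Cc: "\<And>S1 S2. S1 \<in> C \<Longrightarrow> S2 \<in> C \<Longrightarrow> S1 \<subseteq> S2 \<or> S2 \<subseteq> S1" using ch unfolding subset.chain_def by blast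
    have "valid (\<Union>C)" unfolding valid_def
    proof (intro conjI allI impI)
      obtain S0 where "S0 \<in> C" using Cne by blast
      then show "base \<in> \<Union>C" using vbase[OF Cv] by blast
    next
      fix K L \<phi> assume "(K,L,\<phi>) \<in> \<Union>C"
      then obtain S where "S \<in> C" "(K,L,\<phi>) \<in> S" by blast
      then show "good K L \<phi>" using vgood[OF Cv] by blast
    next
      fix K L \<phi> K' L' \<phi>' assume a: "(K,L,\<phi>) \<in> \<Union>C" "(K',L',\<phi>') \<in> \<Union>C"
      then obtain S1 S2 where s: "S1 \<in> C" "(K,L,\<phi>) \<in> S1" "S2 \<in> C" "(K',L',\<phi>') \<in> S2" by blast
      show "compat K L \<phi> K' L' \<phi>'"
      proof (cases "S1 \<subseteq> S2")
        case True then show ?thesis using vcomp[OF Cv[OF s(3)]] s by blast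
      next
        case False then have "S2 \<subseteq> S1" using Cc s by blast
        then show ?thesis using vcomp[OF Cv[OF s(1)]] s by blast
      qed
    qed
    then show "\<Union>C \<in> {S. valid S}" by simp
  qed
  then show ?thesis by blast
qed


end

lemma adjust_bij: assumes "bij_betw c0 A B" "a \<in> A" "b \<in> B"
  shows "\<exists>c. bij_betw c A B \<and> c a = b"
proof -
  define p where "p = c0 a"
  have p: "p \<in> B" using assms bij_betwE unfolding p_def by blast
  define sw where "sw y = (if y = p then b else if y = b then p else y)" for y
  have "bij_betw sw B B"
    by (rule bij_betw_byWitness[where f'=sw]) (auto simp: sw_def p assms(3))
  then have "bij_betw (sw \<circ> c0) A B" using assms(1) bij_betw_trans by blast
  moreover have "(sw \<circ> c0) a = b" unfolding sw_def p_def by simp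
  ultimately show ?thesis by blast
qed

lemma minim_mem: assumes "A \<subseteq> X" "A \<noteq> X" shows "wo_rel.minim |X| (X - A) \<in> X - A"
proof -
  have wo: "wo_rel |X|" unfolding wo_rel_def by (rule card_of_Well_order)
  have "X - A \<noteq> {}" using assms by blast
  then show ?thesis using wo_rel.minim_in[OF wo, of "X - A"] Field_card_of[of X] by simp
qed

lemma small_times: assumes "|A| <o |X|" "|UNIV::nat set| <o |X|" "A \<noteq> {}"
  shows "|A \<times> (UNIV::nat set)| <o |X|"
proof (cases "finite A")
  case True
  have "|A| \<le>o |UNIV::nat set|" by (rule ordLess_imp_ordLeq[OF fin_less[OF True infinite_UNIV_nat]])
  then have "|A \<times> (UNIV::nat set)| =o |UNIV::nat set|" using card_of_Times_infinite[OF infinite_UNIV_nat assms(3)] by blast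
  then show ?thesis using assms(2) by (rule ordIso_ordLess_trans)
next
  case False
  have "|UNIV::nat set| \<le>o |A|" using False infinite_iff_card_of_nat by blast
  then have "|A \<times> (UNIV::nat set)| =o |A|" using card_of_Times_infinite[OF False] by blast
  then show ?thesis using assms(1) by (rule ordIso_ordLess_trans)
qed



context setting begin

interpretation G: group G by (rule grG)
interpretation H: group H by (rule grH)

lemma Dom_sup: "valid S \<Longrightarrow> (K,L,\<phi>) \<in> S \<Longrightarrow> K \<subseteq> Dom S"
  unfolding Dom_def by blast
lemma Rng_sup: "valid S \<Longrightarrow> (K,L,\<phi>) \<in> S \<Longrightarrow> L \<subseteq> Rng S"
  unfolding Rng_def by blast

lemma extend: assumes v: "valid S" and sm: "|Dom S| <o |carrier G|"
  shows "\<exists>S'. valid S' \<and> S \<subset> S'"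
proof -
  define D where "D = Dom S"
  define E where "E = Rng S"
  define f where "f = F S"
  have Dsub: "subgroup D G" unfolding D_def by (rule Dom_sub[OF v])
  have Esub: "subgroup E H" unfolding E_def by (rule Rng_sub[OF v])
  have fb: "bij_betw f D E" unfolding f_def D_def E_def by (rule F_bij[OF v])
  have smD: "|D| <o |carrier G|" using sm unfolding D_def .
  have DE: "|D| =o |E|" using fb card_of_ordIso by blast
  have smE: "|E| <o |carrier H|"
    using ordIso_ordLess_trans[OF ordIso_symmetric[OF DE] ordLess_ordIso_trans[OF smD iso]] .
  have DG: "D \<subseteq> carrier G" using subgroup.subset[OF Dsub] .
  have EH: "E \<subseteq> carrier H" using subgroup.subset[OF Esub] .
  define g where "g = mG D"
  define h where "h = mH E"
  have g: "g \<in> carrier G" "g \<notin> D" using minim_mem[OF DG less_not_eq[OF smD]] unfolding g_def mG_def by auto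
  have h: "h \<in> carrier H" "h \<notin> E" using minim_mem[OF EH less_not_eq[OF smE]] unfolding h_def mH_def by auto
  have Dne: "D \<noteq> {}" using subgroup.one_closed[OF Dsub] by blast
  have Ene: "E \<noteq> {}" using subgroup.one_closed[OF Esub] by blast
  let ?MG = "D \<times> (UNIV::nat set)"
  let ?MH = "E \<times> (UNIV::nat set)"
  have MGinf: "infinite ?MG" using Dne by (simp add: finite_cartesian_product_iff)
  have MHinf: "infinite ?MH" using Ene by (simp add: finite_cartesian_product_iff)
  have MGge: "|D| \<le>o |?MG|" by (rule card_of_Times1) simp
  have MHge: "|E| \<le>o |?MH|" by (rule card_of_Times1) simp
  have MGlt: "|?MG| <o |carrier G|" by (rule small_times[OF smD uncG Dne])
  have MHlt: "|?MH| <o |carrier H|" by (rule small_times[OF smE uncH Ene])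
  have "bij_betw (map_prod f id) ?MG ?MH" by (rule bij_betw_map_prod[OF fb bij_betw_id])
  then have MGH: "|?MG| =o |?MH|" using card_of_ordIso by blast
  obtain D' where D': "subgroup D' G" "D \<subseteq> D'" "g \<in> D'" "|D'| <o |carrier G|"
     "|(\<lambda>x. x <#\<^bsub>G\<^esub> D) ` D'| =o |?MG|"
    using G.extend_subgroup[OF stG Dsub smD g(1) MGinf MGge MGlt] by blast
  obtain E' where E': "subgroup E' H" "E \<subseteq> E'" "h \<in> E'" "|E'| <o |carrier H|"
     "|(\<lambda>x. x <#\<^bsub>H\<^esub> E) ` E'| =o |?MH|"
    using H.extend_subgroup[OF stH Esub smE h(1) MHinf MHge MHlt] by blast
  have "|(\<lambda>x. x <#\<^bsub>G\<^esub> D) ` D'| =o |(\<lambda>x. x <#\<^bsub>H\<^esub> E) ` E'|"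
    using ordIso_transitive[OF ordIso_transitive[OF D'(5) MGH] ordIso_symmetric[OF E'(5)]] .
  then obtain c0 where c0: "bij_betw c0 ((\<lambda>x. x <#\<^bsub>G\<^esub> D) ` D') ((\<lambda>x. x <#\<^bsub>H\<^esub> E) ` E')"
    using card_of_ordIso by blast
  have "\<one>\<^bsub>G\<^esub> <#\<^bsub>G\<^esub> D = D" by (rule G.coset_join3[OF G.one_closed Dsub subgroup.one_closed[OF Dsub]])
  then have DinC: "D \<in> (\<lambda>x. x <#\<^bsub>G\<^esub> D) ` D'" using subgroup.one_closed[OF D'(1)] by (metis image_eqI)
  have "\<one>\<^bsub>H\<^esub> <#\<^bsub>H\<^esub> E = E" by (rule H.coset_join3[OF H.one_closed Esub subgroup.one_closed[OF Esub]])
  then have EinC: "E \<in> (\<lambda>x. x <#\<^bsub>H\<^esub> E) ` E'" using subgroup.one_closed[OF E'(1)] by (metis image_eqI)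
  obtain c where c: "bij_betw c ((\<lambda>x. x <#\<^bsub>G\<^esub> D) ` D') ((\<lambda>x. x <#\<^bsub>H\<^esub> E) ` E')" "c D = E"
    using adjust_bij[OF c0 DinC EinC] by blast
  obtain f' where f': "bij_betw f' D' E'" "\<forall>x\<in>D. f' x = f x"
    "\<forall>K L. K \<subseteq> D \<longrightarrow> L \<subseteq> E \<longrightarrow>
        (\<forall>x\<in>D. \<forall>y\<in>D. (inv\<^bsub>G\<^esub> x \<otimes>\<^bsub>G\<^esub> y \<in> K \<longleftrightarrow> inv\<^bsub>H\<^esub> (f x) \<otimes>\<^bsub>H\<^esub> f y \<in> L)) \<longrightarrow>
        (\<forall>x\<in>D'. \<forall>y\<in>D'. (inv\<^bsub>G\<^esub> x \<otimes>\<^bsub>G\<^esub> y \<in> K \<longleftrightarrow> inv\<^bsub>H\<^esub> (f' x) \<otimes>\<^bsub>H\<^esub> f' y \<in> L))"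
    using extend_map[OF grG grH Dsub D'(1,2) Esub E'(1,2) fb c] by blast
  have fD: "\<forall>x\<in>D. \<forall>y\<in>D. (inv\<^bsub>G\<^esub> x \<otimes>\<^bsub>G\<^esub> y \<in> K \<longleftrightarrow> inv\<^bsub>H\<^esub> (f x) \<otimes>\<^bsub>H\<^esub> f y \<in> L)"
    if t: "(K,L,\<phi>) \<in> S" for K L \<phi>
    using Fcoh[OF v t] unfolding D_def f_def by blast
  have cohS: "\<forall>x\<in>D'. \<forall>y\<in>D'. (inv\<^bsub>G\<^esub> x \<otimes>\<^bsub>G\<^esub> y \<in> K \<longleftrightarrow> inv\<^bsub>H\<^esub> (f' x) \<otimes>\<^bsub>H\<^esub> f' y \<in> L)"
    if t: "(K,L,\<phi>) \<in> S" for K L \<phi>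
  proof -
    have "K \<subseteq> D" "L \<subseteq> E" using Dom_sup[OF v t] Rng_sup[OF v t] unfolding D_def E_def by auto
    then show ?thesis using f'(3) fD[OF t] by blast
  qed
  have f'in: "f' x \<in> E'" if "x \<in> D'" for x using bij_betwE[OF f'(1)] that by blast
  have mS: "mG K \<in> D' \<and> mH L \<in> E'" if t: "(K,L,\<phi>) \<in> S" for K L \<phi>
  proof (cases "K = D")
    case True
    have "L = \<phi> ` K" using good_bij[OF vgood[OF v t]] by (simp add: bij_betw_def)
    also have "\<dots> = f ` K" using Fval[OF v t] unfolding f_def by simp
    also have "\<dots> = E" using True fb by (simp add: bij_betw_def)
    finally have "L = E" .
    then show ?thesis using True D'(3) E'(3) unfolding g_def h_def by simp
  next
    case False
    have "K \<subseteq> D" using Dom_sup[OF v t] unfolding D_def .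
    then obtain x where x: "x \<in> D" "x \<notin> K" using False by blast
    then obtain K2 L2 \<phi>2 where t2: "(K2,L2,\<phi>2) \<in> S" "x \<in> K2" unfolding D_def Dom_def by blast
    have "K \<subseteq> K2" using vchain[OF v t t2(1)] x t2 by blast
    moreover have "K \<noteq> K2" using x t2 by blast
    ultimately have "mG K \<in> K2 \<and> mH L \<in> L2" using vsub[OF v t t2(1)] by blast
    moreover have "K2 \<subseteq> D" "L2 \<subseteq> E" using Dom_sup[OF v t2(1)] Rng_sup[OF v t2(1)] unfolding D_def E_def by auto
    ultimately show ?thesis using D'(2) E'(2) by blast
  qed
  have agr: "f' x = \<phi> x" if t: "(K,L,\<phi>) \<in> S" and x: "x \<in> K" for K L \<phi> x
  proof -
    have "x \<in> D" using Dom_sup[OF v t] x unfolding D_def by blast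
    then have "f' x = f x" using f'(2) by blast
    then show ?thesis using Fval[OF v t x] unfolding f_def by simp
  qed
  have notsub: "\<not> D' \<subseteq> K" if t: "(K,L,\<phi>) \<in> S" for K L \<phi>
    using Dom_sup[OF v t] g(2) D'(3) unfolding D_def by blast
  have c1: "compat K L \<phi> D' E' f'" if t: "(K,L,\<phi>) \<in> S" for K L \<phi>
  proof -
    have "K \<subseteq> D'" "L \<subseteq> E'" using Dom_sup[OF v t] Rng_sup[OF v t] D'(2) E'(2) unfolding D_def E_def by auto
    then show ?thesis unfolding compat_def using agr[OF t] cohS[OF t] mS[OF t] by blast
  qed
  have c2: "compat D' E' f' K L \<phi>" if t: "(K,L,\<phi>) \<in> S" for K L \<phi>
  proof -
    have "K \<subseteq> D'" using Dom_sup[OF v t] D'(2) unfolding D_def by auto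
    then show ?thesis unfolding compat_def using notsub[OF t] by blast
  qed
  have c3: "compat D' E' f' D' E' f'"
  proof -
    have "\<forall>x\<in>D'. \<forall>y\<in>D'. (inv\<^bsub>G\<^esub> x \<otimes>\<^bsub>G\<^esub> y \<in> D' \<longleftrightarrow> inv\<^bsub>H\<^esub> (f' x) \<otimes>\<^bsub>H\<^esub> f' y \<in> E')"
    proof (intro ballI)
      fix x y assume xy: "x \<in> D'" "y \<in> D'"
      have "inv\<^bsub>G\<^esub> x \<otimes>\<^bsub>G\<^esub> y \<in> D'"
        using xy subgroup.m_closed[OF D'(1)] subgroup.m_inv_closed[OF D'(1)] by blast
      moreover have "inv\<^bsub>H\<^esub> (f' x) \<otimes>\<^bsub>H\<^esub> f' y \<in> E'"
        using f'in[OF xy(1)] f'in[OF xy(2)] subgroup.m_closed[OF E'(1)] subgroup.m_inv_closed[OF E'(1)] by blast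
      ultimately show "inv\<^bsub>G\<^esub> x \<otimes>\<^bsub>G\<^esub> y \<in> D' \<longleftrightarrow> inv\<^bsub>H\<^esub> (f' x) \<otimes>\<^bsub>H\<^esub> f' y \<in> E'" by blast
    qed
    then show ?thesis unfolding compat_def by blast
  qed
  have goodn: "good D' E' f'" unfolding good_def using D'(1,4) E'(1) f'(1) by blast
  define S' where "S' = insert (D',E',f') S"
  have vS': "valid S'" unfolding valid_def
  proof (intro conjI allI impI)
    show "base \<in> S'" unfolding S'_def using vbase[OF v] by blast
  next
    fix K L \<phi> assume "(K,L,\<phi>) \<in> S'"
    then have "(K,L,\<phi>) = (D',E',f') \<or> (K,L,\<phi>) \<in> S" unfolding S'_def by blast
    then show "good K L \<phi>" using goodn vgood[OF v] by blast
  next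
    fix K L \<phi> K' L' \<phi>' assume a: "(K,L,\<phi>) \<in> S'" "(K',L',\<phi>') \<in> S'"
    then have a1: "(K,L,\<phi>) = (D',E',f') \<or> (K,L,\<phi>) \<in> S" and a2: "(K',L',\<phi>') = (D',E',f') \<or> (K',L',\<phi>') \<in> S"
      unfolding S'_def by blast+
    show "compat K L \<phi> K' L' \<phi>'"
    proof (cases "(K,L,\<phi>) \<in> S")
      case True
      show ?thesis
      proof (cases "(K',L',\<phi>') \<in> S")
        case True2: True
        show ?thesis using vcomp[OF v True True2] .
      next
        case False
        then have "(K',L',\<phi>') = (D',E',f')" using a2 by blast
        then show ?thesis using c1[OF True] by simp
      qed
    next
      case False
      then have e1: "(K,L,\<phi>) = (D',E',f')" using a1 by blast
      show ?thesis
      proof (cases "(K',L',\<phi>') \<in> S")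
        case True2: True
        show ?thesis using c2[OF True2] e1 by simp
      next
        case False
        then have "(K',L',\<phi>') = (D',E',f')" using a2 by blast
        then show ?thesis using c3 e1 by simp
      qed
    qed
  qed
  have "(D',E',f') \<notin> S" using notsub by blast
  then have "S \<subset> S'" unfolding S'_def by blast
  then show ?thesis using vS' by blast
qed

end


context setting begin

interpretation G: group G by (rule grG)
interpretation H: group H by (rule grH)

lemma Dom_Union: "Dom S = \<Union>{K. \<exists>L \<phi>. (K,L,\<phi>) \<in> S}" unfolding Dom_def by blast
lemma Rng_Union: "Rng S = \<Union>{L. \<exists>K \<phi>. (K,L,\<phi>) \<in> S}" unfolding Rng_def by blast

lemma max_full: "\<exists>M. valid M \<and> Dom M = carrier G \<and> Rng M = carrier H"
proof -
  obtain M where M: "valid M" "\<And>S. valid S \<Longrightarrow> M \<subseteq> S \<Longrightarrow> S = M" using zorn by blast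
  have nsm: "\<not> |Dom M| <o |carrier G|"
  proof
    assume "|Dom M| <o |carrier G|"
    then obtain S' where "valid S'" "M \<subset> S'" using extend[OF M(1)] by blast
    then show False using M(2) by blast
  qed
  let ?Ks = "{K. \<exists>L \<phi>. (K,L,\<phi>) \<in> M}"
  let ?Ls = "{L. \<exists>K \<phi>. (K,L,\<phi>) \<in> M}"
  have D: "Dom M = carrier G"
  proof (rule ccontr)
    assume ne: "Dom M \<noteq> carrier G"
    have "|\<Union>?Ks| <o |carrier G|"
    proof (rule chain_small[OF stG infG])
      show "K \<subseteq> carrier G \<and> |K| <o |carrier G|" if KK: "K \<in> ?Ks" for K
      proof -
        obtain L \<phi> where t: "(K,L,\<phi>) \<in> M" using KK by blast
        have g: "good K L \<phi>" using vgood[OF M(1) t] .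
        show ?thesis using subgroup.subset[OF good_K[OF g]] good_card[OF g] by blast
      qed
      show "K \<subseteq> K' \<or> K' \<subseteq> K" if "K \<in> ?Ks" "K' \<in> ?Ks" for K K'
        using that vchain[OF M(1)] by blast
      show "wo_rel.minim |carrier G| (carrier G - K) \<in> K'" if KK: "K \<in> ?Ks" "K' \<in> ?Ks" "K \<subset> K'" for K K'
      proof -
        obtain L \<phi> L' \<phi>' where t: "(K,L,\<phi>) \<in> M" "(K',L',\<phi>') \<in> M" using KK(1,2) by blast
        show ?thesis using vsub[OF M(1) t] KK(3) unfolding mG_def by blast
      qed
      show "\<Union>?Ks \<noteq> carrier G" using ne Dom_Union by metis
    qed
    then show False using nsm Dom_Union by metis
  qed
  have R: "Rng M = carrier H"
  proof (rule ccontr)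
    assume ne: "Rng M \<noteq> carrier H"
    have "|\<Union>?Ls| <o |carrier H|"
    proof (rule chain_small[OF stH infH])
      show "L \<subseteq> carrier H \<and> |L| <o |carrier H|" if KK: "L \<in> ?Ls" for L
      proof -
        obtain K \<phi> where t: "(K,L,\<phi>) \<in> M" using KK by blast
        have g: "good K L \<phi>" using vgood[OF M(1) t] .
        show ?thesis using subgroup.subset[OF good_L[OF g]] L_small[OF M(1) t] by blast
      qed
      show "L \<subseteq> L' \<or> L' \<subseteq> L" if "L \<in> ?Ls" "L' \<in> ?Ls" for L L'
        using that Lchain[OF M(1)] by blast
      show "wo_rel.minim |carrier H| (carrier H - L) \<in> L'" if KK: "L \<in> ?Ls" "L' \<in> ?Ls" "L \<subset> L'" for L L'
      proof -
        obtain K \<phi> K' \<phi>' where t: "(K,L,\<phi>) \<in> M" "(K',L',\<phi>') \<in> M" using KK(1,2) by blast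
        have "\<not> K' \<subseteq> K"
        proof
          assume "K' \<subseteq> K" then have "L' \<subseteq> L" using vsub[OF M(1) t(2) t(1)] by blast
          then show False using KK(3) by blast
        qed
        then have "K \<subseteq> K'" "K \<noteq> K'" using vchain[OF M(1) t] by blast+
        then show ?thesis using vsub[OF M(1) t] unfolding mH_def by blast
      qed
      show "\<Union>?Ls \<noteq> carrier H" using ne Rng_Union by metis
    qed
    then have smR: "|Rng M| <o |carrier H|" using Rng_Union by metis
    have "|Dom M| =o |Rng M|" using F_bij[OF M(1)] card_of_ordIso by blast
    then have "|Dom M| <o |carrier H|" using smR by (rule ordIso_ordLess_trans)
    then have "|Dom M| <o |carrier G|" using ordIso_symmetric[OF iso] by (rule ordLess_ordIso_trans)
    then show False using nsm by blast
  qed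
  show ?thesis using M(1) D R by blast
qed

end


context setting begin

interpretation G: group G by (rule grG)
interpretation H: group H by (rule grH)

lemma asym: "group_balleans_asymorphic G H"
proof -
  obtain M where M: "valid M" "Dom M = carrier G" "Rng M = carrier H" using max_full by blast
  define f where "f = F M"
  have fb: "bij_betw f (carrier G) (carrier H)" using F_bij[OF M(1)] M(2,3) unfolding f_def by simp
  have fc: "f x \<in> carrier H" if "x \<in> carrier G" for x using bij_betwE[OF fb] that by blast
  have coh: "inv\<^bsub>G\<^esub> x \<otimes>\<^bsub>G\<^esub> y \<in> K \<longleftrightarrow> inv\<^bsub>H\<^esub> (f x) \<otimes>\<^bsub>H\<^esub> f y \<in> L"
    if "(K,L,\<phi>) \<in> M" "x \<in> carrier G" "y \<in> carrier G" for K L \<phi> x y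
    using Fcoh[OF M(1) that(1)] that(2,3) M(2) unfolding f_def by blast
  let ?Ks = "{K. \<exists>L \<phi>. (K,L,\<phi>) \<in> M}"
  let ?Ls = "{L. \<exists>K \<phi>. (K,L,\<phi>) \<in> M}"
  have p1: "prec_mapping (carrier G) (group_ballean_F G) (group_ballean_B G)
                (carrier H) (group_ballean_F H) (group_ballean_B H) f"
    unfolding prec_mapping_def
  proof
    fix A assume A: "A \<in> group_ballean_F G"
    then have A1: "A \<subseteq> carrier G" "|A| <o |carrier G|" unfolding group_ballean_F_def by auto
    have "\<exists>K\<in>?Ks. A \<subseteq> K"
    proof (rule chain_cover[OF stG _ _ _ A1])
      show "|K| <o |carrier G|" if KK: "K \<in> ?Ks" for K
        using KK good_card[OF vgood[OF M(1)]] by blast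
      show "K \<subseteq> K' \<or> K' \<subseteq> K" if KK: "K \<in> ?Ks" "K' \<in> ?Ks" for K K'
        using KK vchain[OF M(1)] by blast
      show "\<Union>?Ks = carrier G" using M(2) Dom_Union by metis
    qed
    then obtain K L \<phi> where t: "(K,L,\<phi>) \<in> M" "A \<subseteq> K" by blast
    have g: "good K L \<phi>" using vgood[OF M(1) t(1)] .
    have Ls: "subgroup L H" using good_L[OF g] .
    have LF: "L \<in> group_ballean_F H" unfolding group_ballean_F_def
      using subgroup.subset[OF Ls] subgroup.one_closed[OF Ls] L_small[OF M(1) t(1)] by blast
    show "\<exists>\<beta>\<in>group_ballean_F H. \<forall>x\<in>carrier G. f ` group_ballean_B G x A \<subseteq> group_ballean_B H (f x) \<beta>"
    proof (intro bexI[OF _ LF] ballI subsetI)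
      fix x z assume x: "x \<in> carrier G" and z: "z \<in> f ` group_ballean_B G x A"
      then obtain a where a: "a \<in> A" "z = f (x \<otimes>\<^bsub>G\<^esub> a)" unfolding group_ballean_B_def l_coset_def by blast
      have ac: "a \<in> carrier G" using a A1 by blast
      have "inv\<^bsub>G\<^esub> x \<otimes>\<^bsub>G\<^esub> (x \<otimes>\<^bsub>G\<^esub> a) = a" using x ac by (simp add: G.m_assoc[symmetric])
      then have "inv\<^bsub>G\<^esub> x \<otimes>\<^bsub>G\<^esub> (x \<otimes>\<^bsub>G\<^esub> a) \<in> K" using a t(2) by auto
      then have "inv\<^bsub>H\<^esub> (f x) \<otimes>\<^bsub>H\<^esub> z \<in> L" using coh[OF t(1) x] x ac a(2) by simp
      moreover have "z \<in> carrier H" using fc x ac a(2) by simp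
      ultimately show "z \<in> group_ballean_B H (f x) L" unfolding group_ballean_B_def
        using H.lc_mem[OF Ls fc[OF x]] by blast
    qed
  qed
  define g where "g = inv_into (carrier G) f"
  have gc: "g y \<in> carrier G" "f (g y) = y" if "y \<in> carrier H" for y
    using that fb unfolding g_def by (auto simp: bij_betw_def inv_into_into f_inv_into_f)
  have p2: "prec_mapping (carrier H) (group_ballean_F H) (group_ballean_B H)
                (carrier G) (group_ballean_F G) (group_ballean_B G) g"
    unfolding prec_mapping_def
  proof
    fix A assume A: "A \<in> group_ballean_F H"
    then have A1: "A \<subseteq> carrier H" "|A| <o |carrier H|" unfolding group_ballean_F_def by auto
    have "\<exists>L\<in>?Ls. A \<subseteq> L"
    proof (rule chain_cover[OF stH _ _ _ A1])
      show "|L| <o |carrier H|" if KK: "L \<in> ?Ls" for L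
        using KK L_small[OF M(1)] by blast
      show "L \<subseteq> L' \<or> L' \<subseteq> L" if KK: "L \<in> ?Ls" "L' \<in> ?Ls" for L L'
        using KK Lchain[OF M(1)] by blast
      show "\<Union>?Ls = carrier H" using M(3) Rng_Union by metis
    qed
    then obtain K L \<phi> where t: "(K,L,\<phi>) \<in> M" "A \<subseteq> L" by blast
    have gg: "good K L \<phi>" using vgood[OF M(1) t(1)] .
    have Ks: "subgroup K G" using good_K[OF gg] .
    have KF: "K \<in> group_ballean_F G" unfolding group_ballean_F_def
      using subgroup.subset[OF Ks] subgroup.one_closed[OF Ks] good_card[OF gg] by blast
    show "\<exists>\<beta>\<in>group_ballean_F G. \<forall>y\<in>carrier H. g ` group_ballean_B H y A \<subseteq> group_ballean_B G (g y) \<beta>"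
    proof (intro bexI[OF _ KF] ballI subsetI)
      fix y z assume y: "y \<in> carrier H" and z: "z \<in> g ` group_ballean_B H y A"
      then obtain a where a: "a \<in> A" "z = g (y \<otimes>\<^bsub>H\<^esub> a)" unfolding group_ballean_B_def l_coset_def by blast
      have ac: "a \<in> carrier H" using a A1 by blast
      have ya: "y \<otimes>\<^bsub>H\<^esub> a \<in> carrier H" using y ac by simp
      have "inv\<^bsub>H\<^esub> (f (g y)) \<otimes>\<^bsub>H\<^esub> f (g (y \<otimes>\<^bsub>H\<^esub> a)) = a"
        using gc[OF y] gc[OF ya] y ac by (simp add: H.m_assoc[symmetric])
      then have "inv\<^bsub>H\<^esub> (f (g y)) \<otimes>\<^bsub>H\<^esub> f (g (y \<otimes>\<^bsub>H\<^esub> a)) \<in> L" using a t(2) by auto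
      then have "inv\<^bsub>G\<^esub> (g y) \<otimes>\<^bsub>G\<^esub> z \<in> K" using coh[OF t(1) gc(1)[OF y] gc(1)[OF ya]] a(2) by simp
      moreover have "z \<in> carrier G" using gc(1)[OF ya] a(2) by simp
      ultimately show "z \<in> group_ballean_B G (g y) K" unfolding group_ballean_B_def
        using G.lc_mem[OF Ks gc(1)[OF y]] by blast
    qed
  qed
  have "asymorphism (carrier G) (group_ballean_F G) (group_ballean_B G)
                (carrier H) (group_ballean_F H) (group_ballean_B H) f"
    unfolding asymorphism_def using fb p1 p2 unfolding g_def by blast
  then show ?thesis unfolding group_balleans_asymorphic_def asymorphic_def by blast
qed

end

lemma uncountable_less: assumes "\<not> countable A" shows "|UNIV::nat set| <o |A|"
proof (rule ccontr)
  assume "\<not> |UNIV::nat set| <o |A|"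
  then have "|A| \<le>o |UNIV::nat set|"
    using not_ordLess_iff_ordLeq[OF card_of_Well_order card_of_Well_order] by blast
  then have "\<exists>h. inj_on h A \<and> h ` A \<subseteq> (UNIV::nat set)" by (rule card_of_ordLeq[THEN iffD2])
  then obtain h :: "_ \<Rightarrow> nat" where "inj_on h A" by blast
  then have "countable A" by (rule countableI)
  then show False using assms by blast
qed

theorem theorem3:
  fixes G :: "('a, 'm) monoid_scheme" and H :: "('b, 'n) monoid_scheme"
  assumes "group G" and "group H"
    and "\<not> countable (carrier G)" and "\<not> countable (carrier H)"
    and "(card_of (carrier G), card_of (carrier H)) \<in> ordIso"
    and "regularCard (card_of (carrier G))"
  shows "group_balleans_asymorphic G H"
proof -
  have infG: "\<not> finite (carrier G)" using assms(3) countable_finite by auto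
  have stG: "stable |carrier G|"
    using regularCard_stable[OF card_of_Card_order _ assms(6)] infG by (simp add: Field_card_of)
  have stH: "stable |carrier H|" using stable_ordIso1[OF stG ordIso_symmetric[OF assms(5)]] .
  have uG: "|UNIV::nat set| <o |carrier G|" by (rule uncountable_less[OF assms(3)])
  have uH: "|UNIV::nat set| <o |carrier H|" by (rule uncountable_less[OF assms(4)])
  have "setting G H" unfolding setting_def using assms(1,2,5) stG stH uG uH by simp
  then interpret setting G H .
  show ?thesis by (rule asym)
qed


end
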